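(* There is a universal constant $C\ge1$ such that for every $k\ge1$ and every perfect square $n$, \[\sum_{\lambda\vdash k}\frac{k!}{\lambda_1!\cdots\lambda_r!}\cdot\frac{(n)_{r}}{|\mathrm{Aut}(\lambda)|}\cdot\left|\mathbb E_{x\in\mathcal S(\sqrt n)}\big[x_1^{\lambda_1}\cdots x_r^{\lambda_r}\big]\right|\ \le\ k^{Ck}\,n^{k/2},\] where for each partition $\lambda=(\lambda_1\ge\cdots\ge\lambda_r>0)$ of $k$, $r=r(\lambda)$ is its number of parts. Moreover, for $n\ge6$ one may take $C=2$.
   Context: $\mathcal S(\sqrt n)=\{x\in\{\pm1\}^n:\sum_i x_i=\sqrt n\}$ with $x$ uniform on it. $(n)_r=n(n-1)\cdots(n-r+1)$ is the falling factorial. For a partition $\lambda$ of $k$, $|\mathrm{Aut}(\lambda)|=\prod_{i\ge1}p_i(\lambda)!$ where $p_i(\lambda)$ is the number of parts of $\lambda$ equal to $i$. *)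

theory Defs
  imports "HOL-Analysis.Analysis"
begin

definition partitions_of :: "nat \<Rightarrow> nat list set" where
  "partitions_of k = {lam. sorted_wrt (\<ge>) lam \<and> (\<forall>p\<in>set lam. 0 < p) \<and> sum_list lam = k}"

definition falling_fact :: "nat \<Rightarrow> nat \<Rightarrow> real" where
  "falling_fact n r = (\<Prod>i<r. real n - real i)"

definition aut_card :: "nat list \<Rightarrow> nat" where
  "aut_card lam = (\<Prod>i\<in>set lam. fact (count_list lam i))"

definition slice :: "nat \<Rightarrow> (nat \<Rightarrow> real) set" where
  "slice n = {x \<in> {0..<n} \<rightarrow>\<^sub>E {-1, 1}. (\<Sum>i<n. x i) = sqrt (real n)}"

text \<open>E_{x uniform on S(sqrt n)} [x_1^{lam_1} ... x_r^{lam_r}] (0-based coordinates).\<close>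
definition slice_moment :: "nat \<Rightarrow> nat list \<Rightarrow> real" where
  "slice_moment n lam =
     (\<Sum>x\<in>slice n. \<Prod>j<length lam. x j ^ (lam ! j)) / real (card (slice n))"

definition lhsB6 :: "nat \<Rightarrow> nat \<Rightarrow> real" where
  "lhsB6 k n = (\<Sum>lam\<in>partitions_of k.
      (fact k / (\<Prod>j<length lam. fact (lam ! j))) *
      (falling_fact n (length lam) / real (aut_card lam)) *
      \<bar>slice_moment n lam\<bar>)"

end

theory Submission
  imports Defs
begin

definition Esum :: "nat \<Rightarrow> nat set \<Rightarrow> real" where
  "Esum n A = (\<Sum>x\<in>slice n. \<Prod>i\<in>A. x i)"

lemma slice_finite: "finite (slice n)"
proof -
  have "slice n \<subseteq> {0..<n} \<rightarrow>\<^sub>E {-1, 1::real}" unfolding slice_def by auto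
  moreover have "finite ({0..<n} \<rightarrow>\<^sub>E {-1, 1::real})" by (intro finite_PiE) auto
  ultimately show ?thesis by (rule finite_subset)
qed

lemma slice_vals: "x \<in> slice n \<Longrightarrow> i < n \<Longrightarrow> x i = -1 \<or> x i = 1"
  unfolding slice_def by (auto simp: PiE_def Pi_def)

lemma slice_ext: "x \<in> slice n \<Longrightarrow> \<not> i < n \<Longrightarrow> x i = undefined"
  unfolding slice_def by (auto simp: PiE_def extensional_def)

lemma slice_sum: "x \<in> slice n \<Longrightarrow> (\<Sum>i<n. x i) = sqrt (real n)"
  unfolding slice_def by auto

lemma slice_perm_in:
  assumes h: "bij_betw h {0..<n} {0..<n}" and x: "x \<in> slice n"
  shows "(\<lambda>i. if i < n then x (h i) else undefined) \<in> slice n"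
proof -
  have hi: "i < n \<Longrightarrow> h i < n" for i using h by (auto simp: bij_betw_def)
  have "(\<Sum>i<n. (\<lambda>i. if i < n then x (h i) else undefined) i) = (\<Sum>i\<in>{0..<n}. x (h i))"
    by (simp add: lessThan_atLeast0)
  also have "\<dots> = (\<Sum>i\<in>{0..<n}. x i)" using sum.reindex_bij_betw[OF h] by blast
  also have "\<dots> = sqrt (real n)" using slice_sum[OF x] by (simp add: lessThan_atLeast0)
  finally show ?thesis unfolding slice_def using slice_vals[OF x] hi
    by (auto simp: PiE_def Pi_def extensional_def)
qed

lemma Esum_perm:
  assumes h: "bij_betw h {0..<n} {0..<n}" and A: "A \<subseteq> {0..<n}"
  shows "Esum n (h ` A) = Esum n A"
proof -
  define h' where "h' = inv_into {0..<n} h"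
  have h': "bij_betw h' {0..<n} {0..<n}" unfolding h'_def by (rule bij_betw_inv_into[OF h])
  define P where "P = (\<lambda>x i. if i < n then x (h i) else (undefined::real))"
  define Q where "Q = (\<lambda>x i. if i < n then x (h' i) else (undefined::real))"
  have hi: "i < n \<Longrightarrow> h i < n" for i using h by (auto simp: bij_betw_def)
  have h'i: "i < n \<Longrightarrow> h' i < n" for i using h' by (auto simp: bij_betw_def)
  have hh': "i < n \<Longrightarrow> h (h' i) = i" for i unfolding h'_def
    by (meson atLeastLessThan_iff bij_betw_inv_into_right h zero_le)
  have h'h: "i < n \<Longrightarrow> h' (h i) = i" for i unfolding h'_def
    by (meson atLeastLessThan_iff bij_betw_inv_into_left h zero_le)
  have bij: "bij_betw P (slice n) (slice n)"
  proof (rule bij_betw_byWitness[where f'=Q])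
    show "\<forall>a\<in>slice n. Q (P a) = a"
    proof
      fix a assume a: "a \<in> slice n"
      show "Q (P a) = a" using slice_ext[OF a] h'i hh' by (auto simp: P_def Q_def fun_eq_iff)
    qed
    show "\<forall>a\<in>slice n. P (Q a) = a"
    proof
      fix a assume a: "a \<in> slice n"
      show "P (Q a) = a" using slice_ext[OF a] hi h'h by (auto simp: P_def Q_def fun_eq_iff)
    qed
    show "P ` slice n \<subseteq> slice n" using slice_perm_in[OF h] unfolding P_def by auto
    show "Q ` slice n \<subseteq> slice n" using slice_perm_in[OF h'] unfolding Q_def by auto
  qed
  have inj: "inj_on h A" using h A by (meson bij_betw_def inj_on_subset)
  have "Esum n (h ` A) = (\<Sum>x\<in>slice n. \<Prod>i\<in>A. x (h i))"
    unfolding Esum_def by (simp add: prod.reindex[OF inj] o_def)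
  also have "\<dots> = (\<Sum>x\<in>slice n. \<Prod>i\<in>A. P x i)"
    using A by (intro sum.cong refl prod.cong) (auto simp: P_def)
  also have "\<dots> = Esum n A" unfolding Esum_def
    using sum.reindex_bij_betw[OF bij, of "\<lambda>x. \<Prod>i\<in>A. x i"] by simp
  finally show ?thesis .
qed

lemma Esum_sym:
  assumes A: "A \<subseteq> {0..<n}" and B: "B \<subseteq> {0..<n}" and c: "card A = card B"
  shows "Esum n A = Esum n B"
proof -
  have fA: "finite A" "finite B" using A B finite_subset by blast+
  have "\<exists>f. bij_betw f A B" using bij_betw_iff_card[OF fA] c by simp
  then obtain f where f: "bij_betw f A B" by blast
  have "card ({0..<n} - A) = card ({0..<n} - B)"
    using A B c fA by (simp add: card_Diff_subset)
  then have "\<exists>g. bij_betw g ({0..<n} - A) ({0..<n} - B)"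
    using bij_betw_iff_card[of "{0..<n} - A" "{0..<n} - B"] by simp
  then obtain g where g: "bij_betw g ({0..<n} - A) ({0..<n} - B)" by blast
  define h where "h = (\<lambda>i. if i \<in> A then f i else g i)"
  have "bij_betw h A B = bij_betw f A B" by (rule bij_betw_cong) (simp add: h_def)
  with f have 1: "bij_betw h A B" by simp
  have "bij_betw h ({0..<n} - A) ({0..<n} - B) = bij_betw g ({0..<n} - A) ({0..<n} - B)"
    by (rule bij_betw_cong) (simp add: h_def)
  with g have 2: "bij_betw h ({0..<n} - A) ({0..<n} - B)" by simp
  have "bij_betw h (A \<union> ({0..<n} - A)) (B \<union> ({0..<n} - B))"
    by (rule bij_betw_combine[OF 1 2]) auto
  moreover have "A \<union> ({0..<n} - A) = {0..<n}" "B \<union> ({0..<n} - B) = {0..<n}" using A B by auto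
  ultimately have h: "bij_betw h {0..<n} {0..<n}" by simp
  have "h ` A = B" using 1 by (simp add: bij_betw_def)
  with Esum_perm[OF h A] show ?thesis by simp
qed


lemma Esum_rec:
  assumes n: "n = m^2" and s: "s < n"
  shows "real m * Esum n {0..<s} = real s * Esum n {0..<s-1} + real (n - s) * Esum n {0..<Suc s}"
proof -
  define A where "A = {0..<s}"
  have sq: "sqrt (real n) = real m" using n by simp
  have "real m * Esum n A = (\<Sum>x\<in>slice n. (\<Prod>i\<in>A. x i) * (\<Sum>i<n. x i))"
  proof -
    have "real m * Esum n A = (\<Sum>x\<in>slice n. real m * (\<Prod>i\<in>A. x i))"
      by (simp add: Esum_def sum_distrib_left)
    also have "\<dots> = (\<Sum>x\<in>slice n. (\<Prod>i\<in>A. x i) * (\<Sum>i<n. x i))"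
      by (intro sum.cong refl) (simp add: slice_sum sq mult.commute)
    finally show ?thesis .
  qed
  also have "\<dots> = (\<Sum>x\<in>slice n. \<Sum>i<n. (\<Prod>j\<in>A. x j) * x i)"
    by (simp add: sum_distrib_left)
  also have "\<dots> = (\<Sum>i<n. \<Sum>x\<in>slice n. (\<Prod>j\<in>A. x j) * x i)"
    by (rule sum.swap)
  also have "\<dots> = (\<Sum>i\<in>{0..<s}. \<Sum>x\<in>slice n. (\<Prod>j\<in>A. x j) * x i)
       + (\<Sum>i\<in>{s..<n}. \<Sum>x\<in>slice n. (\<Prod>j\<in>A. x j) * x i)"
  proof -
    have "{..<n} = {0..<s} \<union> {s..<n}" using s by auto
    then show ?thesis by (simp add: sum.union_disjoint)
  qed
  also have "(\<Sum>i\<in>{0..<s}. \<Sum>x\<in>slice n. (\<Prod>j\<in>A. x j) * x i) = (\<Sum>i\<in>{0..<s}. Esum n {0..<s-1})"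
  proof (intro sum.cong refl)
    fix i assume i: "i \<in> {0..<s}"
    have "(\<Sum>x\<in>slice n. (\<Prod>j\<in>A. x j) * x i) = Esum n (A - {i})"
      unfolding Esum_def
    proof (intro sum.cong refl)
      fix x assume x: "x \<in> slice n"
      have "x i * x i = 1" using slice_vals[OF x, of i] i s by auto
      moreover have "(\<Prod>j\<in>A. x j) = x i * (\<Prod>j\<in>A - {i}. x j)"
        using i unfolding A_def by (simp add: prod.remove)
      ultimately show "(\<Prod>j\<in>A. x j) * x i = (\<Prod>j\<in>A - {i}. x j)"
        by (metis mult.commute mult.left_commute mult_1)
    qed
    also have "\<dots> = Esum n {0..<s-1}"
      using i s unfolding A_def by (intro Esum_sym) auto
    finally show "(\<Sum>x\<in>slice n. (\<Prod>j\<in>A. x j) * x i) = Esum n {0..<s-1}" .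
  qed
  also have "(\<Sum>i\<in>{s..<n}. \<Sum>x\<in>slice n. (\<Prod>j\<in>A. x j) * x i) = (\<Sum>i\<in>{s..<n}. Esum n {0..<Suc s})"
  proof (intro sum.cong refl)
    fix i assume i: "i \<in> {s..<n}"
    have "(\<Sum>x\<in>slice n. (\<Prod>j\<in>A. x j) * x i) = Esum n (insert i A)"
      unfolding Esum_def using i unfolding A_def by (intro sum.cong refl) (simp add: mult.commute)
    also have "\<dots> = Esum n {0..<Suc s}"
      using i s unfolding A_def by (intro Esum_sym) auto
    finally show "(\<Sum>x\<in>slice n. (\<Prod>j\<in>A. x j) * x i) = Esum n {0..<Suc s}" .
  qed
  finally show ?thesis unfolding A_def by simp
qed


definition gB :: "nat \<Rightarrow> real" where "gB s = fact s * 2 ^ (s - 1)"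

lemma gB_step: "real (t+2) * (gB (t+1) + real (t+1) * gB t) \<le> gB (t+2)"
proof -
  have f1: "fact (t+1) = real (t+1) * fact t" by simp
  have f2: "fact (t+2) = real (t+2) * fact (t+1)" using fact_Suc[of "t+1"] by simp
  have p: "(2::real) ^ (t - 1) \<le> 2 ^ t" by (rule power_increasing) auto
  have "gB (t+1) + real (t+1) * gB t = fact (t+1) * (2^t + 2^(t-1))"
    unfolding gB_def f1 by (simp add: algebra_simps)
  also have "\<dots> \<le> fact (t+1) * 2^(t+1)" using p by (intro mult_left_mono) auto
  finally have "real (t+2) * (gB (t+1) + real (t+1) * gB t) \<le> real (t+2) * (fact (t+1) * 2^(t+1))"
    by (intro mult_left_mono) auto
  also have "\<dots> = gB (t+2)" unfolding gB_def f2 by simp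
  finally show ?thesis .
qed

lemma Esum_empty: "Esum n {} = real (card (slice n))"
  by (simp add: Esum_def)

lemma Esum_bound:
  assumes n: "n = m^2" and s: "s \<le> n"
  shows "\<bar>Esum n {0..<s}\<bar> * real m ^ s \<le> gB s * real (card (slice n))"
  using s
proof (induction s rule: nat_less_induct)
  case (1 s)
  define c where "c = real (card (slice n))"
  show ?case
  proof (cases s)
    case 0
    then show ?thesis by (simp add: Esum_empty gB_def)
  next
    case (Suc s')
    show ?thesis
    proof (cases s')
      case 0
      then have s1: "s = 1" using Suc by simp
      with 1 have "0 < n" by simp
      then have m0: "m > 0" using n by (cases m) auto
      have "real m * Esum n {0..<0} = real (n - 0) * Esum n {0..<Suc 0}"
        using Esum_rec[OF n \<open>0 < n\<close>] by simp
      then have "real m * c = real m * real m * Esum n {0..<1}"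
        using n by (simp add: Esum_empty c_def power2_eq_square)
      then have "c = real m * Esum n {0..<1}" using m0 by simp
      moreover have "c \<ge> 0" unfolding c_def by simp
      ultimately show ?thesis using s1 m0 unfolding c_def[symmetric]
        by (simp add: gB_def abs_mult mult.commute zero_le_mult_iff)
    next
      case (Suc t)
      then have st: "s = t + 2" using \<open>s = Suc s'\<close> by simp
      have IH1: "\<bar>Esum n {0..<t+1}\<bar> * real m ^ (t+1) \<le> gB (t+1) * c"
        using 1 st unfolding c_def by auto
      have IH0: "\<bar>Esum n {0..<t}\<bar> * real m ^ t \<le> gB t * c"
        using 1 st unfolding c_def by auto
      have lt: "t + 1 < n" using 1 st by simp
      define E2 where "E2 = Esum n {0..<t+2}"
      define E1 where "E1 = Esum n {0..<t+1}"
      define E0 where "E0 = Esum n {0..<t}"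
      define N where "N = real (n - (t+1))"
      have rec: "real m * E1 = real (t+1) * E0 + N * E2"
        using Esum_rec[OF n lt] unfolding E0_def E1_def E2_def N_def by simp
      have Npos: "N > 0" unfolding N_def using lt by simp
      have nm: "real n = real m * real m" using n by (simp add: power2_eq_square)
      have "N * (\<bar>E2\<bar> * real m ^ (t+2)) = \<bar>(real m * E1 - real (t+1) * E0) * real m ^ (t+2)\<bar>"
        using rec Npos by (simp add: abs_mult)
      also have "\<dots> \<le> (real m * \<bar>E1\<bar> + real (t+1) * \<bar>E0\<bar>) * real m ^ (t+2)"
      proof -
        have "\<bar>real m * E1 - real (t+1) * E0\<bar> \<le> real m * \<bar>E1\<bar> + real (t+1) * \<bar>E0\<bar>"
          using abs_triangle_ineq4[of "real m * E1" "real (t+1) * E0"] by (simp add: abs_mult)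
        then show ?thesis unfolding abs_mult by (simp add: mult_right_mono)
      qed
      also have "\<dots> = real n * (\<bar>E1\<bar> * real m ^ (t+1) + real (t+1) * (\<bar>E0\<bar> * real m ^ t))"
        unfolding nm by (simp add: algebra_simps)
      also have "\<dots> \<le> real n * (gB (t+1) * c + real (t+1) * (gB t * c))"
        using IH1 IH0 unfolding E0_def E1_def
        by (intro mult_left_mono add_mono) auto
      also have "\<dots> \<le> (real (t+2) * N) * ((gB (t+1) + real (t+1) * gB t) * c)"
      proof -
        have a: "real t + 2 \<le> real n" using lt by simp
        have b: "(real t + 1) * (real t + 2) \<le> (real t+1) * real n" using a by (intro mult_left_mono) auto
        have "real n \<le> real (t+2) * N" using b lt unfolding N_def
          by (simp add: of_nat_diff algebra_simps)
        moreover have "0 \<le> (gB (t+1) + real (t+1) * gB t) * c"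
          unfolding gB_def c_def by simp
        moreover have eq: "gB (t+1) * c + real (t+1) * (gB t * c) = (gB (t+1) + real (t+1) * gB t) * c"
          by (simp add: algebra_simps)
        ultimately show ?thesis unfolding eq using mult_right_mono by blast
      qed
      finally have "N * (\<bar>E2\<bar> * real m ^ (t+2)) \<le> N * (real (t+2) * ((gB (t+1) + real (t+1) * gB t) * c))"
        by (simp add: algebra_simps)
      then have "\<bar>E2\<bar> * real m ^ (t+2) \<le> real (t+2) * (gB (t+1) + real (t+1) * gB t) * c"
        using Npos by (simp add: mult.assoc)
      also have "\<dots> \<le> gB (t+2) * c"
        using gB_step[of t] unfolding c_def by (intro mult_right_mono) auto
      finally show ?thesis using st unfolding E2_def c_def by simp
    qed
  qed
qed


fun ps :: "nat list \<Rightarrow> nat set" where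
  "ps [] = {}"
| "ps (x # xs) = insert x ((+) x ` ps xs)"

lemma ps_sub: "\<forall>p\<in>set xs. 0 < p \<Longrightarrow> ps xs \<subseteq> {1..sum_list xs}"
  by (induction xs) auto

lemma ps_mem: "xs \<noteq> [] \<Longrightarrow> sum_list xs \<in> ps xs"
proof (induction xs)
  case Nil then show ?case by simp
next
  case (Cons x xs) then show ?case by (cases "xs = []") auto
qed

lemma ps_inj: "\<forall>p\<in>set xs. 0 < p \<Longrightarrow> \<forall>p\<in>set ys. 0 < p \<Longrightarrow> ps xs = ps ys \<Longrightarrow> xs = ys"
proof (induction xs arbitrary: ys)
  case Nil then show ?case by (cases ys) auto
next
  case (Cons x xs)
  show ?case
  proof (cases ys)
    case Nil then show ?thesis using Cons.prems by simp
  next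
    case (Cons y ys')
    have sx: "ps xs \<subseteq> {1..sum_list xs}" "ps ys' \<subseteq> {1..sum_list ys'}"
      using ps_sub Cons.prems \<open>ys = y # ys'\<close> by auto
    have eq: "insert x ((+) x ` ps xs) = insert y ((+) y ` ps ys')"
      using Cons.prems \<open>ys = y # ys'\<close> by simp
    have "x \<in> insert y ((+) y ` ps ys')" using eq by blast
    then have yx: "y \<le> x" using sx by auto
    have "y \<in> insert x ((+) x ` ps xs)" using eq by blast
    then have "x \<le> y" using sx by auto
    with yx have xy: "x = y" by simp
    have nx: "x \<notin> (+) x ` ps xs" "x \<notin> (+) x ` ps ys'" using sx by auto
    have "(+) x ` ps xs = (+) x ` ps ys'"
      using eq xy nx by (metis insert_ident)
    then have "ps xs = ps ys'" using inj_image_eq_iff[of "(+) x"] by (simp add: inj_def)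
    then have "xs = ys'" using Cons.IH Cons.prems \<open>ys = y # ys'\<close> by simp
    then show ?thesis using xy \<open>ys = y # ys'\<close> by simp
  qed
qed

lemma card_partitions: "1 \<le> k \<Longrightarrow> card (partitions_of k) \<le> 2 ^ (k - 1)"
proof -
  assume k: "1 \<le> k"
  let ?f = "\<lambda>lam. ps lam - {k}"
  have "card (partitions_of k) \<le> card (Pow {1..<k})"
  proof (rule card_inj_on_le)
    show "inj_on ?f (partitions_of k)"
    proof (rule inj_onI)
      fix a b assume a: "a \<in> partitions_of k" and b: "b \<in> partitions_of k" and e: "?f a = ?f b"
      have "sum_list a = k" "sum_list b = k" using a b by (simp_all add: partitions_of_def)
      then have "a \<noteq> []" "b \<noteq> []" using k by (metis le_zero_eq one_neq_zero sum_list.Nil)+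
      then have "k \<in> ps a" "k \<in> ps b" using ps_mem \<open>sum_list a = k\<close> \<open>sum_list b = k\<close> by metis+
      then have "ps a = ps b" using e by (metis insert_Diff)
      then show "a = b" using ps_inj a b by (auto simp: partitions_of_def)
    qed
    show "?f ` partitions_of k \<subseteq> Pow {1..<k}"
      using ps_sub by (fastforce simp: partitions_of_def)
  qed auto
  also have "\<dots> = 2 ^ (k - 1)" by (simp add: card_Pow)
  finally show ?thesis .
qed

lemma bern_nat: "(a::nat) ^ Suc j + Suc j * a ^ j \<le> (a + 1) ^ Suc j"
proof (induction j)
  case 0 then show ?case by simp
next
  case (Suc j)
  have "a ^ Suc (Suc j) + Suc (Suc j) * a ^ Suc j \<le> (a+1) * (a ^ Suc j + Suc j * a ^ j)"
    by (simp add: algebra_simps)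
  also have "\<dots> \<le> (a+1) * (a + 1) ^ Suc j" using Suc by (intro mult_left_mono) auto
  finally show ?case by simp
qed

lemma fact_pow_le: "fact k * 2 ^ (k - 1) \<le> (k::nat) ^ k"
proof (induction k)
  case 0 then show ?case by simp
next
  case (Suc k)
  show ?case
  proof (cases k)
    case 0 then show ?thesis by simp
  next
    case (Suc j)
    have b: "2 * k ^ k \<le> (k + 1) ^ k" using bern_nat[of k j] Suc by simp
    have "fact (Suc k) * 2 ^ (Suc k - 1) = (k+1) * 2 * (fact k * 2 ^ (k - 1))"
      using Suc by (simp add: algebra_simps)
    also have "\<dots> \<le> (k+1) * 2 * k ^ k" using Suc.IH by (intro mult_left_mono) auto
    also have "\<dots> \<le> (k+1) * (k+1)^k" using mult_le_mono2[OF b, of "k+1"] by (simp add: mult.assoc)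
    finally show ?thesis by simp
  qed
qed


lemma pow_pm1: "x = -1 \<or> x = (1::real) \<Longrightarrow> x ^ p = (if odd p then x else 1)"
  by auto

lemma moment_bound:
  assumes n: "n = m^2" and r: "length lam \<le> n"
  shows "\<bar>slice_moment n lam\<bar> * real m ^ card {j\<in>{..<length lam}. odd (lam!j)}
           \<le> gB (card {j\<in>{..<length lam}. odd (lam!j)})"
proof -
  define Od where "Od = {j\<in>{..<length lam}. odd (lam!j)}"
  define c where "c = real (card (slice n))"
  define s where "s = card Od"
  have OdS: "Od \<subseteq> {0..<n}" using r unfolding Od_def by auto
  have sr: "s \<le> length lam" unfolding s_def Od_def
    by (metis (no_types, lifting) card_lessThan card_mono finite_lessThan mem_Collect_eq subsetI)
  have "(\<Sum>x\<in>slice n. \<Prod>j<length lam. x j ^ (lam ! j)) = Esum n Od"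
    unfolding Esum_def
  proof (intro sum.cong refl)
    fix x assume x: "x \<in> slice n"
    have "(\<Prod>j<length lam. x j ^ (lam ! j)) = (\<Prod>j<length lam. if odd (lam!j) then x j else 1)"
      using slice_vals[OF x] r by (intro prod.cong refl pow_pm1) auto
    also have "\<dots> = (\<Prod>j\<in>Od. x j)" unfolding Od_def by (rule prod.inter_filter[symmetric]) simp
    finally show "(\<Prod>j<length lam. x j ^ (lam ! j)) = (\<Prod>j\<in>Od. x j)" .
  qed
  also have "\<dots> = Esum n {0..<s}" unfolding s_def using OdS card_mono[OF _ OdS] by (intro Esum_sym) auto
  finally have M: "slice_moment n lam = Esum n {0..<s} / c"
    unfolding slice_moment_def c_def by simp
  have B: "\<bar>Esum n {0..<s}\<bar> * real m ^ s \<le> gB s * c"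
    unfolding c_def using Esum_bound[OF n] sr r by simp
  have g0: "gB s \<ge> 0" unfolding gB_def by simp
  have "\<bar>slice_moment n lam\<bar> * real m ^ s \<le> gB s"
  proof (cases "c = 0")
    case True then show ?thesis using M g0 by simp
  next
    case False
    then have cp: "c > 0" unfolding c_def by simp
    have "\<bar>slice_moment n lam\<bar> * real m ^ s = (\<bar>Esum n {0..<s}\<bar> * real m ^ s) / c"
      using M cp by simp
    also have "\<dots> \<le> gB s" using B cp by (simp add: divide_le_eq)
    finally show ?thesis .
  qed
  then show ?thesis unfolding s_def Od_def .
qed

lemma gB_mono: "s \<le> k \<Longrightarrow> gB s \<le> gB k"
  unfolding gB_def
  by (intro mult_mono) (auto intro: fact_mono power_increasing)

lemma term_bound:
  assumes n: "n = m^2" and lam: "lam \<in> partitions_of k" and k1: "1 \<le> k"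
  shows "(fact k / (\<Prod>j<length lam. fact (lam ! j))) *
      (falling_fact n (length lam) / real (aut_card lam)) * \<bar>slice_moment n lam\<bar>
      \<le> fact k * gB k * real m ^ k"
proof -
  define r where "r = length lam"
  define Od where "Od = {j\<in>{..<r}. odd (lam!j)}"
  define s where "s = card Od"
  have pos: "\<forall>p\<in>set lam. 0 < p" and sk: "sum_list lam = k"
    using lam by (auto simp: partitions_of_def)
  have ksum: "k = (\<Sum>j<r. lam ! j)" using sk unfolding r_def
    by (simp add: sum_list_sum_nth atLeast0LessThan)
  have posj: "j < r \<Longrightarrow> 0 < lam ! j" for j using pos unfolding r_def by auto
  have sr: "s \<le> r" unfolding s_def Od_def
    by (metis (no_types, lifting) card_lessThan card_mono finite_lessThan mem_Collect_eq subsetI)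
  have "(\<Sum>j<r. (if odd (lam!j) then 1 else 2::nat)) \<le> (\<Sum>j<r. lam ! j)"
  proof (intro sum_mono)
    fix j assume "j \<in> {..<r}"
    then have "0 < lam ! j" using posj by simp
    then show "(if odd (lam!j) then 1 else 2::nat) \<le> lam ! j" by (auto elim: evenE)
  qed
  moreover have "(\<Sum>j<r. (if odd (lam!j) then 1 else 2::nat)) + s = 2 * r"
  proof -
    have "s = (\<Sum>j<r. (if odd (lam!j) then 1 else 0::nat))"
      unfolding s_def Od_def by (simp add: sum.inter_filter[symmetric])
    then have "(\<Sum>j<r. (if odd (lam!j) then 1 else 2::nat)) + s
        = (\<Sum>j<r. (if odd (lam!j) then 1 else 2::nat) + (if odd (lam!j) then 1 else 0))"
      by (simp add: sum.distrib)
    also have "\<dots> = (\<Sum>j<r. 2)" by (intro sum.cong refl) auto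
    finally show ?thesis by simp
  qed
  ultimately have two: "2 * r \<le> k + s" using ksum by linarith
  have rk: "r \<le> k" using two sr by linarith
  have sk': "s \<le> k" using sr rk by simp
  have P1: "1 \<le> (\<Prod>j<length lam. fact (lam ! j) :: real)"
    by (intro prod_ge_1) (simp add: fact_ge_1)
  have A1: "1 \<le> aut_card lam" unfolding aut_card_def
    by (intro prod_ge_1) (simp add: fact_ge_1)
  have F1: "fact k / (\<Prod>j<length lam. fact (lam ! j)) \<le> (fact k :: real)"
    using P1 by (simp add: divide_le_eq)
  have F0: "0 \<le> fact k / (\<Prod>j<length lam. fact (lam ! j) :: real)"
    using P1 by simp
  have rhs0: "0 \<le> fact k * gB k * real m ^ k" unfolding gB_def by simp
  show ?thesis
  proof (cases "r \<le> n")
    case False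
    then have "falling_fact n r = 0" unfolding falling_fact_def
      by (subst prod_zero_iff) auto
    then show ?thesis using rhs0 unfolding r_def by simp
  next
    case True
    have ff0: "0 \<le> falling_fact n r" unfolding falling_fact_def
      using True by (intro prod_nonneg) auto
    have ffle: "falling_fact n r \<le> real n ^ r" unfolding falling_fact_def
    proof -
      have "(\<Prod>i<r. real n - real i) \<le> (\<Prod>i<r. real n)"
        using True by (intro prod_mono) auto
      then show "(\<Prod>i<r. real n - real i) \<le> real n ^ r" by simp
    qed
    have G1: "falling_fact n r / real (aut_card lam) \<le> falling_fact n r"
    proof -
      have "real (aut_card lam) \<ge> 1" using A1 by simp
      then have "falling_fact n r * 1 \<le> falling_fact n r * real (aut_card lam)"
        using ff0 by (intro mult_left_mono) auto
      then show ?thesis using \<open>real (aut_card lam) \<ge> 1\<close> by (simp add: divide_le_eq)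
    qed
    have G0: "0 \<le> falling_fact n r / real (aut_card lam)" using ff0 by simp
    have Mb: "\<bar>slice_moment n lam\<bar> * real m ^ s \<le> gB s"
      using moment_bound[OF n] True unfolding s_def Od_def r_def by simp
    have "lam \<noteq> []"
    proof
      assume "lam = []" with sk k1 show False by simp
    qed
    have r1: "1 \<le> r" unfolding r_def using \<open>lam \<noteq> []\<close> by (cases lam) auto
    have m1: "1 \<le> m" using True r1 n by (cases m) auto
    have "(fact k / (\<Prod>j<length lam. fact (lam ! j))) *
      (falling_fact n r / real (aut_card lam)) * \<bar>slice_moment n lam\<bar>
      \<le> fact k * falling_fact n r * \<bar>slice_moment n lam\<bar>"
      using F1 F0 G1 G0 by (intro mult_right_mono mult_mono) auto
    also have "\<dots> \<le> fact k * (real n ^ r * \<bar>slice_moment n lam\<bar>)"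
      using ffle by (simp add: mult.assoc mult_right_mono)
    also have "real n ^ r * \<bar>slice_moment n lam\<bar>
        = real m ^ (2*r - s) * (\<bar>slice_moment n lam\<bar> * real m ^ s)"
    proof -
      have "real n ^ r = real m ^ (2*r)" using n by (simp add: power_mult)
      also have "\<dots> = real m ^ (2*r - s) * real m ^ s"
        using sr by (simp add: power_add[symmetric])
      finally show ?thesis by simp
    qed
    also have "real m ^ (2*r - s) * (\<bar>slice_moment n lam\<bar> * real m ^ s) \<le> real m ^ k * gB k"
    proof (intro mult_mono)
      show "real m ^ (2*r - s) \<le> real m ^ k" using m1 two by (intro power_increasing) auto
      show "\<bar>slice_moment n lam\<bar> * real m ^ s \<le> gB k" using Mb gB_mono[OF sk'] by simp
    qed (auto simp: gB_def)
    finally show ?thesis unfolding r_def by (simp add: mult_left_mono ac_simps)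
  qed
qed


lemma main_bound:
  assumes k: "1 \<le> k" and n: "n = m^2"
  shows "lhsB6 k n \<le> real k powr (2 * real k) * real n powr (real k / 2)"
proof -
  define T where "T = fact k * gB k * real m ^ k"
  have T0: "0 \<le> T" unfolding T_def gB_def by simp
  have "lhsB6 k n \<le> real (card (partitions_of k)) * T"
    unfolding lhsB6_def T_def by (rule sum_bounded_above) (rule term_bound[OF n _ k])
  also have "\<dots> \<le> 2 ^ (k - 1) * T"
  proof -
    have "real (card (partitions_of k)) \<le> real (2 ^ (k - 1))"
      using card_partitions[OF k] by (simp only: of_nat_le_iff)
    then show ?thesis using T0 by (intro mult_right_mono) auto
  qed
  also have "\<dots> = (real (fact k * 2 ^ (k - 1)))^2 * real m ^ k"
    unfolding T_def gB_def by (simp add: power2_eq_square of_nat_fact)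
  also have "\<dots> \<le> (real (k ^ k))^2 * real m ^ k"
  proof -
    have "real (fact k * 2 ^ (k - 1)) \<le> real (k ^ k)"
      using fact_pow_le[of k] by (simp only: of_nat_le_iff)
    then show ?thesis by (intro mult_right_mono power_mono) auto
  qed
  also have "\<dots> = real k powr (2 * real k) * real n powr (real k / 2)"
  proof -
    have kp: "0 < real k" using k by simp
    have "real k powr (2 * real k) = real k ^ (2 * k)"
      using powr_realpow[OF kp, of "2*k"] by simp
    also have "\<dots> = (real (k ^ k))^2" by (simp add: power_mult[symmetric] mult.commute)
    finally have 1: "real k powr (2 * real k) = (real (k ^ k))^2" .
    have 2: "real n powr (real k / 2) = real m ^ k"
    proof (cases "m = 0")
      case True then show ?thesis using n k by simp
    next
      case False
      then have mp: "0 < real m" by simp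
      have eq: "real n = real m powr 2" using n mp by (simp add: powr_realpow[OF mp, of 2])
      have "real n powr (real k / 2) = (real m powr 2) powr (real k / 2)" using eq by (simp only:)
      also have "\<dots> = real m powr (2 * (real k / 2))" by (rule powr_powr)
      also have "\<dots> = real m ^ k" using powr_realpow[OF mp, of k] by simp
      finally show ?thesis .
    qed
    show ?thesis unfolding 1 2 ..
  qed
  finally show ?thesis .
qed

theorem lemmaB6:
  shows "(\<exists>C::real. C \<ge> 1 \<and>
            (\<forall>k n::nat. k \<ge> 1 \<longrightarrow> (\<exists>m::nat. n = m ^ 2) \<longrightarrow>
               lhsB6 k n \<le> real k powr (C * real k) * real n powr (real k / 2)))
       \<and> (\<forall>k n::nat. k \<ge> 1 \<longrightarrow> (\<exists>m::nat. n = m ^ 2) \<longrightarrow> n \<ge> 6 \<longrightarrow>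
               lhsB6 k n \<le> real k powr (2 * real k) * real n powr (real k / 2))"
proof
  show "\<exists>C::real. C \<ge> 1 \<and>
            (\<forall>k n::nat. k \<ge> 1 \<longrightarrow> (\<exists>m::nat. n = m ^ 2) \<longrightarrow>
               lhsB6 k n \<le> real k powr (C * real k) * real n powr (real k / 2))"
    by (rule exI[of _ 2]) (auto intro: main_bound)
  show "\<forall>k n::nat. k \<ge> 1 \<longrightarrow> (\<exists>m::nat. n = m ^ 2) \<longrightarrow> n \<ge> 6 \<longrightarrow>
               lhsB6 k n \<le> real k powr (2 * real k) * real n powr (real k / 2)"
    by (auto intro: main_bound)
qed

end
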